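(* Let $C\subseteq\{0,1\}^n$ with $|C|=2^{Rn}$, let $\Pi=\{A_i\}_{i\in\{0,1\}^{R'n}}$ be a partition of $C$ into $2^{R'n}$ sets of size $2^{\ell}$ with $R'n=Rn-\ell$, and let $C_\Pi$ be the stochastic code that encodes message $i$ as a uniformly random element of $A_i$. Let $L\ge1$. If for every view $V\in\{0,1,?\}^n$ with exactly $\rho_r n$ non-$?$ coordinates and every message index $i$, \[\#\{x\in A_i : x\text{ is consistent with }V\}<L,\] then the equivocation of $C_\Pi$ satisfies $\Delta\ge Rn-\rho_r n-\log_2 L$.
   Context: A codeword $x$ is consistent with a view $V=(v_1,\dots,v_n)\in\{0,1,?\}^n$ if $x_i=v_i$ whenever $v_i\ne ?$. With $\mathbf S$ the uniformly random message, $\mathbf X$ its (random) encoding, and for $\mathscr S\subseteq[n]$ of size $\rho_r n$, $\mathbf V(\mathscr S)$ the string equal to $\mathbf X$ on $\mathscr S$ and $?$ elsewhere, the equivocation is $\Delta=\min_{|\mathscr S|=\rho_r n}H(\mathbf S\mid\mathbf V(\mathscr S))$. *)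

theory Defs
  imports "HOL-Probability.Probability"
begin

text \<open>Codewords are bit strings of length n, represented as bool lists.
  Views are strings over {0,1,?}, represented as bool option lists
  (None stands for the erasure symbol ?).\<close>

definition consistent :: "bool list \<Rightarrow> bool option list \<Rightarrow> bool" where
  "consistent x V \<longleftrightarrow> length x = length V \<and>
     (\<forall>i < length V. V ! i \<noteq> None \<longrightarrow> x ! i = the (V ! i))"

definition revealed :: "bool option list \<Rightarrow> nat" where
  "revealed V = card {i. i < length V \<and> V ! i \<noteq> None}"

definition view :: "bool list \<Rightarrow> nat set \<Rightarrow> bool option list" where
  "view x S = map (\<lambda>i. if i \<in> S then Some (x ! i) else None) [0..<length x]"

definition joint_msg_view ::
  "'i set \<Rightarrow> ('i \<Rightarrow> bool list set) \<Rightarrow> nat set \<Rightarrow> ('i \<times> bool option list) pmf" where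
  "joint_msg_view I A S =
     do { i \<leftarrow> pmf_of_set I; x \<leftarrow> pmf_of_set (A i); return_pmf (i, view x S) }"

definition cond_entropy :: "('a \<times> 'b) pmf \<Rightarrow> real" where
  "cond_entropy p =
     - (\<Sum>z \<in> set_pmf p. pmf p z * log 2 (pmf p z / pmf (map_pmf snd p) (snd z)))"

definition equivocation ::
  "nat \<Rightarrow> nat \<Rightarrow> 'i set \<Rightarrow> ('i \<Rightarrow> bool list set) \<Rightarrow> real" where
  "equivocation n k I A =
     Min {cond_entropy (joint_msg_view I A S) | S. S \<subseteq> {..<n} \<and> card S = k}"

end

theory Submission
  imports Defs
begin

lemma gibbs:
  fixes w :: "'a \<Rightarrow> real"
  assumes fin: "finite Q" and pos: "\<forall>v\<in>Q. w v > 0" and s1: "sum w Q = 1"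
  shows "- log 2 (card Q) \<le> (\<Sum>v\<in>Q. w v * log 2 (w v))"
proof -
  have ne: "Q \<noteq> {}" using s1 by auto
  define m where "m = real (card Q)"
  have m: "m > 0" using fin ne by (simp add: m_def card_gt_0_iff)
  have "\<And>v. v \<in> Q \<Longrightarrow> w v * ln (1 / (m * w v)) \<le> 1/m - w v"
  proof -
    fix v assume v: "v \<in> Q"
    have wp: "w v > 0" using pos v by auto
    have "ln (1 / (m * w v)) \<le> 1 / (m * w v) - 1"
      by (rule ln_le_minus_one) (use m wp in simp)
    hence "w v * ln (1 / (m * w v)) \<le> w v * (1 / (m * w v) - 1)"
      using wp by (simp add: mult_left_mono)
    also have "\<dots> = 1/m - w v" using wp m by (simp add: field_simps)
    finally show "w v * ln (1 / (m * w v)) \<le> 1/m - w v" .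
  qed
  hence "(\<Sum>v\<in>Q. w v * ln (1 / (m * w v))) \<le> (\<Sum>v\<in>Q. 1/m - w v)"
    by (rule sum_mono)
  also have "\<dots> = 0" using m s1 by (simp add: sum_subtractf m_def)
  finally have A: "(\<Sum>v\<in>Q. w v * ln (1 / (m * w v))) \<le> 0" .
  have "\<And>v. v \<in> Q \<Longrightarrow> w v * ln (1 / (m * w v)) = - w v * ln m - w v * ln (w v)"
    using pos m by (simp add: ln_div ln_mult algebra_simps)
  hence "(\<Sum>v\<in>Q. w v * ln (1 / (m * w v))) = (\<Sum>v\<in>Q. - w v * ln m - w v * ln (w v))"
    by (rule sum.cong[OF refl])
  also have "\<dots> = - ln m * sum w Q - (\<Sum>v\<in>Q. w v * ln (w v))"
    by (simp add: sum_subtractf sum_distrib_left sum_negf algebra_simps)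
  finally have "(\<Sum>v\<in>Q. w v * ln (1 / (m * w v))) = - ln m * sum w Q - (\<Sum>v\<in>Q. w v * ln (w v))" .
  with A s1 have B: "- ln m \<le> (\<Sum>v\<in>Q. w v * ln (w v))" by simp
  have "(\<Sum>v\<in>Q. w v * log 2 (w v)) = (\<Sum>v\<in>Q. w v * ln (w v)) / ln 2"
    by (simp add: log_def sum_divide_distrib)
  moreover have "- log 2 (card Q) = - ln m / ln 2" by (simp add: log_def m_def)
  moreover have "- ln m / ln 2 \<le> (\<Sum>v\<in>Q. w v * ln (w v)) / ln 2"
    using divide_right_mono[OF B, of "ln 2"] by simp
  ultimately show ?thesis by simp
qed

lemma view_len[simp]: "length (view x S) = length x"
  by (simp add: view_def)

lemma consistent_view: "consistent x (view x S)"
  by (simp add: consistent_def view_def)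

lemma revealed_view:
  assumes "S \<subseteq> {..<length x}"
  shows "revealed (view x S) = card S"
proof -
  have "{i. i < length (view x S) \<and> view x S ! i \<noteq> None} = S"
    using assms by (auto simp: view_def split: if_splits)
  thus ?thesis by (simp add: revealed_def)
qed

lemma pmf_map_Pair: "pmf (map_pmf (Pair i) P) (a, b) = (if i = a then pmf P b else 0)"
proof -
  have "Pair i -` {(a, b)} = (if i = a then {b} else {})" by auto
  thus ?thesis by (simp add: pmf_map measure_pmf_single)
qed

lemma uniform_sigma:
  fixes I :: "'i set" and A :: "'i \<Rightarrow> 'x set"
  assumes fI: "finite I" and neI: "I \<noteq> {}" and fA: "\<forall>i\<in>I. finite (A i)"
    and cA: "\<forall>i\<in>I. card (A i) = c" and c: "c > 0"
  shows "pmf_of_set I \<bind> (\<lambda>i. map_pmf (Pair i) (pmf_of_set (A i))) = pmf_of_set (Sigma I A)"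
proof (rule pmf_eqI)
  fix z :: "'i \<times> 'x"
  obtain a b where z: "z = (a, b)" by (cases z)
  have neA: "\<And>i. i \<in> I \<Longrightarrow> A i \<noteq> {}" using cA c fA by fastforce
  have cardS: "card (Sigma I A) = card I * c" using fI fA cA by (simp add: card_SigmaI)
  have finS: "finite (Sigma I A)" using fI fA by auto
  have neS: "Sigma I A \<noteq> {}" using neI neA by auto
  have "(\<Sum>i\<in>I. pmf (map_pmf (Pair i) (pmf_of_set (A i))) (a, b))
        = (\<Sum>i\<in>I. if i = a then pmf (pmf_of_set (A i)) b else 0)"
    by (simp add: pmf_map_Pair)
  also have "\<dots> = (if a \<in> I then pmf (pmf_of_set (A a)) b else 0)"
    using fI by (simp add: sum.delta')
  also have "\<dots> = indicator (Sigma I A) (a, b) / c"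
    using neA fA cA by (auto simp: indicator_def)
  finally have "pmf (pmf_of_set I \<bind> (\<lambda>i. map_pmf (Pair i) (pmf_of_set (A i)))) (a, b)
      = indicator (Sigma I A) (a, b) / c / card I"
    using fI neI by (simp add: pmf_bind_pmf_of_set)
  also have "\<dots> = pmf (pmf_of_set (Sigma I A)) (a, b)"
    using finS neS cardS by (simp add: field_simps)
  finally show "pmf (pmf_of_set I \<bind> (\<lambda>i. map_pmf (Pair i) (pmf_of_set (A i)))) z
      = pmf (pmf_of_set (Sigma I A)) z" using z by simp
qed

lemma card_views:
  assumes S: "S \<subseteq> {..<n}" and X: "\<forall>x\<in>X. length x = n"
  shows "card ((\<lambda>x. view x S) ` X) \<le> 2 ^ card S"
proof -
  define h :: "(nat \<Rightarrow> bool) \<Rightarrow> bool option list" where "h = (\<lambda>f. map (\<lambda>i. if i \<in> S then Some (f i) else None) [0..<n])"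
  have finS: "finite S" using S finite_subset by blast
  have "(\<lambda>x. view x S) ` X \<subseteq> h ` (S \<rightarrow>\<^sub>E (UNIV :: bool set))"
  proof
    fix v assume "v \<in> (\<lambda>x. view x S) ` X"
    then obtain x where x: "x \<in> X" "v = view x S" by auto
    have "v = h (restrict (\<lambda>j. x ! j) S)"
      using x X by (auto simp: h_def view_def)
    moreover have "restrict (\<lambda>j. x ! j) S \<in> S \<rightarrow>\<^sub>E (UNIV :: bool set)" by auto
    ultimately show "v \<in> h ` (S \<rightarrow>\<^sub>E (UNIV :: bool set))" by blast
  qed
  hence "card ((\<lambda>x. view x S) ` X) \<le> card (h ` (S \<rightarrow>\<^sub>E (UNIV :: bool set)))"
    using finS by (intro card_mono) (auto simp: finite_PiE)
  also have "\<dots> \<le> card (S \<rightarrow>\<^sub>E (UNIV :: bool set))" by (rule card_image_le) (use finS in \<open>auto simp: finite_PiE\<close>)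
  also have "\<dots> = 2 ^ card S" using finS by (simp add: card_PiE)
  finally show ?thesis .
qed

lemma entropy_bound:
  fixes I :: "'i set" and A :: "'i \<Rightarrow> bool list set" and L :: real
  assumes S: "S \<subseteq> {..<n}" and cS: "card S = k"
    and fI: "finite I" and neI: "I \<noteq> {}" and fA: "\<forall>i\<in>I. finite (A i)"
    and cA: "\<forall>i\<in>I. card (A i) = c" and c: "c > 0"
    and lenA: "\<forall>i\<in>I. \<forall>x\<in>A i. length x = n"
    and L: "L \<ge> 1"
    and hyp: "\<forall>V. length V = n \<and> revealed V = k \<longrightarrow>
               (\<forall>i\<in>I. real (card {x \<in> A i. consistent x V}) < L)"
  shows "cond_entropy (joint_msg_view I A S) \<ge> log 2 (card (Sigma I A)) - k - log 2 L"
proof -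
  define B where "B = Sigma I A"
  define g where "g = (\<lambda>(i::'i, x::bool list). (i, view x S))"
  define p where "p = map_pmf g (pmf_of_set B)"
  define q where "q = map_pmf snd p"
  have finB: "finite B" using fI fA by (auto simp: B_def)
  have neA: "\<And>i. i \<in> I \<Longrightarrow> A i \<noteq> {}" using cA c fA by fastforce
  have neB: "B \<noteq> {}" using neI neA by (auto simp: B_def)
  have N: "card B > 0" using finB neB by (simp add: card_gt_0_iff)
  have jp: "joint_msg_view I A S = p"
  proof -
    have "joint_msg_view I A S = pmf_of_set I \<bind> (\<lambda>i. map_pmf g (map_pmf (Pair i) (pmf_of_set (A i))))"
      unfolding joint_msg_view_def by (simp add: map_pmf_def g_def bind_assoc_pmf bind_return_pmf)
    also have "\<dots> = map_pmf g (pmf_of_set I \<bind> (\<lambda>i. map_pmf (Pair i) (pmf_of_set (A i))))"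
      by (simp add: map_bind_pmf)
    also have "\<dots> = p" unfolding p_def B_def
      by (subst uniform_sigma[OF fI neI fA cA c]) simp
    finally show ?thesis .
  qed
  define T where "T = set_pmf p"
  define Q where "Q = set_pmf q"
  have T: "T = g ` B" using finB neB by (simp add: T_def p_def)
  have finT: "finite T" using T finB by simp
  have Q: "Q = snd ` T" by (simp add: Q_def q_def T_def)
  have finQ: "finite Q" using Q finT by simp
  have Qv: "Q = (\<lambda>x. view x S) ` (snd ` B)" using Q T by (simp add: image_image g_def case_prod_beta)
  have lenB: "\<forall>x\<in>snd ` B. length x = n" using lenA by (auto simp: B_def)
  have cardQ: "card Q \<le> 2 ^ k" using card_views[OF S lenB] Qv cS by simp
  have neQ: "Q \<noteq> {}" by (simp add: Q_def set_pmf_not_empty)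
  have cardQ1: "card Q \<ge> 1" using finQ neQ by (simp add: Suc_le_eq card_gt_0_iff)
  have logQ: "log 2 (card Q) \<le> k"
  proof -
    have "log 2 (card Q) \<le> log 2 (2 ^ k)"
      using cardQ cardQ1 by (subst log_le_cancel_iff) (auto simp del: of_nat_power simp add: of_nat_power[symmetric])
    thus ?thesis by simp
  qed
  have pb: "pmf p z \<le> L / card B" for z
  proof -
    obtain a v where z: "z = (a, v)" by (cases z)
    have pz: "pmf p z = card (B \<inter> g -` {z}) / card B"
      by (simp add: p_def pmf_map measure_pmf_of_set finB neB)
    have "real (card (B \<inter> g -` {z})) < L"
    proof (cases "B \<inter> g -` {z} = {}")
      case True thus ?thesis using L by simp
    next
      case False
      then obtain x0 where x0: "(a, x0) \<in> B" "view x0 S = v" using z by (auto simp: g_def)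
      have aI: "a \<in> I" and x0A: "x0 \<in> A a" using x0 by (auto simp: B_def)
      have lx0: "length x0 = n" using lenA aI x0A by auto
      have lv: "length v = n" using x0 lx0 by auto
      have rv: "revealed v = k" using x0 revealed_view[of S x0] S lx0 cS by simp
      have sub: "B \<inter> g -` {z} \<subseteq> Pair a ` {x \<in> A a. consistent x v}"
        using z by (auto simp: B_def g_def consistent_view)
      have "card (B \<inter> g -` {z}) \<le> card (Pair a ` {x \<in> A a. consistent x v})"
        using sub fA aI by (intro card_mono) auto
      also have "\<dots> \<le> card {x \<in> A a. consistent x v}" by (rule card_image_le) (use fA aI in auto)
      finally have "real (card (B \<inter> g -` {z})) \<le> card {x \<in> A a. consistent x v}" by simp
      also have "\<dots> < L" using hyp lv rv aI by blast
      finally show ?thesis .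
    qed
    thus ?thesis using pz N by (simp add: divide_right_mono)
  qed
  have ppos: "z \<in> T \<Longrightarrow> pmf p z > 0" for z by (simp add: T_def pmf_positive)
  have qpos: "z \<in> T \<Longrightarrow> pmf q (snd z) > 0" for z
    using Q by (auto simp: Q_def pmf_positive)
  have sumT: "(\<Sum>z\<in>T. pmf p z) = 1" using finT by (simp add: sum_pmf_eq_1 T_def)
  have sumQ: "sum (pmf q) Q = 1" using finQ by (simp add: sum_pmf_eq_1 Q_def)
  have H: "cond_entropy p = (\<Sum>z\<in>T. pmf p z * (- log 2 (pmf p z))) + (\<Sum>z\<in>T. pmf p z * log 2 (pmf q (snd z)))"
  proof -
    have "cond_entropy p = - (\<Sum>z\<in>T. pmf p z * log 2 (pmf p z / pmf q (snd z)))"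
      by (simp add: cond_entropy_def T_def q_def)
    also have "\<dots> = - (\<Sum>z\<in>T. pmf p z * log 2 (pmf p z) - pmf p z * log 2 (pmf q (snd z)))"
    proof (intro arg_cong[where f=uminus] sum.cong refl)
      fix z assume zT: "z \<in> T"
      have "log 2 (pmf p z / pmf q (snd z)) = log 2 (pmf p z) - log 2 (pmf q (snd z))"
        using ppos[OF zT] qpos[OF zT] by (simp add: log_divide)
      thus "pmf p z * log 2 (pmf p z / pmf q (snd z)) = pmf p z * log 2 (pmf p z) - pmf p z * log 2 (pmf q (snd z))"
        by (simp add: right_diff_distrib)
    qed
    finally show ?thesis by (simp add: sum_subtractf sum_negf)
  qed
  have P1: "(\<Sum>z\<in>T. pmf p z * (- log 2 (pmf p z))) \<ge> log 2 (card B) - log 2 L"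
  proof -
    have "(\<Sum>z\<in>T. pmf p z * (log 2 (card B) - log 2 L)) \<le> (\<Sum>z\<in>T. pmf p z * (- log 2 (pmf p z)))"
    proof (rule sum_mono)
      fix z assume zT: "z \<in> T"
      have "log 2 (pmf p z) \<le> log 2 (L / card B)"
        using pb[of z] ppos[OF zT] by (subst log_le_cancel_iff) auto
      also have "\<dots> = log 2 L - log 2 (card B)" using L N by (simp add: log_divide)
      finally show "pmf p z * (log 2 (card B) - log 2 L) \<le> pmf p z * (- log 2 (pmf p z))"
        using ppos[OF zT] by (intro mult_left_mono) auto
    qed
    thus ?thesis using sumT by (simp add: sum_distrib_right[symmetric])
  qed
  have P2: "(\<Sum>z\<in>T. pmf p z * log 2 (pmf q (snd z))) = (\<Sum>v\<in>Q. pmf q v * log 2 (pmf q v))"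
  proof -
    have "(\<Sum>z\<in>T. pmf p z * log 2 (pmf q (snd z))) = measure_pmf.expectation p (\<lambda>z. log 2 (pmf q (snd z)))"
      using finT by (subst integral_measure_pmf[of T]) (auto simp: T_def)
    also have "\<dots> = measure_pmf.expectation q (\<lambda>v. log 2 (pmf q v))"
      by (simp add: q_def)
    also have "\<dots> = (\<Sum>v\<in>Q. pmf q v * log 2 (pmf q v))"
      using finQ by (subst integral_measure_pmf[of Q]) (auto simp: Q_def)
    finally show ?thesis .
  qed
  have G: "- log 2 (card Q) \<le> (\<Sum>v\<in>Q. pmf q v * log 2 (pmf q v))"
    using gibbs[OF finQ _ sumQ] by (simp add: Q_def pmf_positive)
  have "cond_entropy (joint_msg_view I A S) = cond_entropy p" using jp by simp
  thus ?thesis using H P1 P2 G logQ by (simp add: B_def)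
qed

theorem corollary4p2:
  fixes n l k :: nat and R R' rho_r L :: real
    and C :: "bool list set" and I :: "'i set" and A :: "'i \<Rightarrow> bool list set"
  assumes C_sub: "C \<subseteq> {x. length x = n}"
    and C_card: "real (card C) = 2 powr (R * real n)"
    and R'_def: "R' * real n = R * real n - real l"
    and I_card: "real (card I) = 2 powr (R' * real n)"
    and part_cover: "(\<Union>i\<in>I. A i) = C"
    and part_disj: "\<forall>i\<in>I. \<forall>j\<in>I. i \<noteq> j \<longrightarrow> A i \<inter> A j = {}"
    and part_size: "\<forall>i\<in>I. card (A i) = 2 ^ l"
    and k_def: "real k = rho_r * real n"
    and k_le: "k \<le> n"
    and L_ge: "L \<ge> 1"
    and hyp: "\<forall>V. length V = n \<and> revealed V = k \<longrightarrow>
               (\<forall>i\<in>I. real (card {x \<in> A i. consistent x V}) < L)"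
  shows "equivocation n k I A \<ge> R * real n - rho_r * real n - log 2 L"
proof -
  have cI: "card I > 0"
  proof -
    have "real (card I) > 0" using I_card by simp
    thus ?thesis by simp
  qed
  hence fI: "finite I" and neI: "I \<noteq> {}" using card_gt_0_iff by blast+
  have fA: "\<forall>i\<in>I. finite (A i)"
    using part_size by (metis card.infinite power_not_zero zero_neq_numeral)
  have lenA: "\<forall>i\<in>I. \<forall>x\<in>A i. length x = n" using part_cover C_sub by blast
  have cardSig: "card (Sigma I A) = card C"
  proof -
    have "card (Sigma I A) = (\<Sum>i\<in>I. card (A i))" using fI fA by (simp add: card_SigmaI)
    also have "\<dots> = card (\<Union>i\<in>I. A i)" using fI fA part_disj by (subst card_UN_disjoint) auto
    finally show ?thesis using part_cover by simp
  qed
  have logC: "log 2 (card C) = R * real n" using C_card by simp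
  define E where "E = {cond_entropy (joint_msg_view I A S) | S. S \<subseteq> {..<n} \<and> card S = k}"
  have finE: "finite E"
  proof -
    have "E = (\<lambda>S. cond_entropy (joint_msg_view I A S)) ` {S. S \<subseteq> {..<n} \<and> card S = k}"
      by (auto simp: E_def)
    moreover have "finite {S. S \<subseteq> {..<n} \<and> card S = k}"
      by (rule finite_subset[of _ "Pow {..<n}"]) auto
    ultimately show ?thesis by simp
  qed
  have neE: "E \<noteq> {}"
  proof -
    have "{..<k} \<subseteq> {..<n} \<and> card {..<k} = k" using k_le by auto
    thus ?thesis unfolding E_def by blast
  qed
  have "\<forall>e\<in>E. R * real n - rho_r * real n - log 2 L \<le> e"
  proof
    fix e assume "e \<in> E"
    then obtain S where S: "S \<subseteq> {..<n}" "card S = k" and e: "e = cond_entropy (joint_msg_view I A S)"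
      by (auto simp: E_def)
    have "log 2 (card (Sigma I A)) - k - log 2 L \<le> e"
      unfolding e
      by (rule entropy_bound[OF S fI neI fA _ _ lenA L_ge hyp, of "2 ^ l"]) (use part_size in auto)
    thus "R * real n - rho_r * real n - log 2 L \<le> e" using cardSig logC k_def by simp
  qed
  thus ?thesis unfolding equivocation_def E_def[symmetric] using finE neE by (simp add: Min_ge_iff)
qed

end
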